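(* Let $n,p,r,d$ be positive integers with $d\le\min(p,r)$, let ${\mathbf S}\in\mathbb R^{p\times p}$ be symmetric positive definite, ${\mathbf F}\in\mathbb R^{n\times r}$ of full column rank, ${\mathbf M}\in\mathbb R^{n\times p}$, ${\mathbf S}_{\mathrm{fit}}=n^{-1}{\mathbf M}^T{\mathbf F}({\mathbf F}^T{\mathbf F})^{-1}{\mathbf F}^T{\mathbf M}$, and assume ${\mathbf S}_{\mathrm{res}}={\mathbf S}-{\mathbf S}_{\mathrm{fit}}$ is positive definite. Fix $\alpha\in\mathbb R^{p\times d}$ with $\alpha^T\alpha=I_d$. Over symmetric positive definite $\Delta\in\mathbb R^{p\times p}$, the function $$G(\Delta)=-\tfrac{pn}{2}\log(2\pi)-\tfrac n2\log|\Delta|-\tfrac n2\operatorname{tr}(\Delta^{-1}{\mathbf S})+\tfrac n2\operatorname{tr}\big[(\alpha^T\Delta\alpha)^{-1}\alpha^T{\mathbf S}_{\mathrm{fit}}\alpha\big]$$ attains its maximum at the $\Delta$ given by $$\Delta^{-1}={\mathbf S}^{-1}+\alpha(\alpha^T{\mathbf S}_{\mathrm{res}}\alpha)^{-1}\alpha^T-\alpha(\alpha^T{\mathbf S}\alpha)^{-1}\alpha^T,$$ and the maximal value equals $$-\tfrac{pn}{2}\big[\log(2\pi)+1\big]-\tfrac n2\log|\alpha^T{\mathbf S}_{\mathrm{res}}\alpha|-\tfrac n2\log|{\mathbf S}|+\tfrac n2\log|\alpha^T{\mathbf S}\alpha|.$$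
   Context: $|A|$ denotes the determinant and $\operatorname{tr}$ the trace. $G$ is the function obtained from the EM $Q$-function after maximizing over the parameter $\xi$; ${\mathbf S}$, ${\mathbf M}$, ${\mathbf F}$ are respectively an averaged conditional second-moment matrix, the matrix of conditional means, and the matrix of centered basis functions of the response. *)

theory Defs
  imports "HOL-Analysis.Analysis"
begin

definition spd :: "real^'p^'p \<Rightarrow> bool" where
  "spd A \<longleftrightarrow> transpose A = A \<and> (\<forall>x. x \<noteq> 0 \<longrightarrow> x \<bullet> (A *v x) > 0)"

definition S_fit :: "real^'r^'n \<Rightarrow> real^'p^'n \<Rightarrow> real^'p^'p" where
  "S_fit F M = (1 / real CARD('n)) *\<^sub>R
     (transpose M ** F ** matrix_inv (transpose F ** F) ** transpose F ** M)"

definition G_fun :: "real \<Rightarrow> real^'p^'p \<Rightarrow> real^'p^'p \<Rightarrow> real^'d^'p \<Rightarrow> real^'p^'p \<Rightarrow> real" where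
  "G_fun nn S Sf \<alpha> \<Delta> =
     - (real CARD('p) * nn / 2) * ln (2 * pi)
     - (nn / 2) * ln (det \<Delta>)
     - (nn / 2) * trace (matrix_inv \<Delta> ** S)
     + (nn / 2) * trace (matrix_inv (transpose \<alpha> ** \<Delta> ** \<alpha>) ** (transpose \<alpha> ** Sf ** \<alpha>))"

end

theory Submission
  imports Defs "HOL-Computational_Algebra.Polynomial"
begin


lemma mm_add_r: "((A::real^'n^'m) + B) ** C = A ** C + B ** (C::real^'k^'n)"
  by (vector matrix_matrix_mult_def sum.distrib[symmetric] field_simps)
lemma mm_sub_l: "(A::real^'n^'m) ** (B - C) = A ** B - A ** (C::real^'k^'n)"
  by (vector matrix_matrix_mult_def sum_subtractf[symmetric] field_simps)
lemma mm_sub_r: "((A::real^'n^'m) - B) ** C = A ** C - B ** (C::real^'k^'n)"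
  by (vector matrix_matrix_mult_def sum_subtractf[symmetric] field_simps)
lemma transpose_add: "transpose ((A::real^'n^'m) + B) = transpose A + transpose B"
  by (vector transpose_def)
lemma transpose_sub: "transpose ((A::real^'n^'m) - B) = transpose A - transpose B"
  by (vector transpose_def)
lemma mv_add_l: "((A::real^'n^'m) + B) *v x = A *v x + B *v x"
  by (simp add: matrix_vector_mult_add_rdistrib)
lemma mv_sub_l: "((A::real^'n^'m) - B) *v x = A *v x - B *v x"
  by (simp add: matrix_vector_mult_diff_rdistrib)

lemma dot_transpose: "(x::real^'m) \<bullet> ((A::real^'n^'m) *v y) = (transpose A *v x) \<bullet> y"
  by (simp add: dot_lmul_matrix)

lemma minv: fixes A :: "real^'n^'n" assumes "invertible A"
  shows "A ** matrix_inv A = mat 1" "matrix_inv A ** A = mat 1"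
  using someI_ex[OF assms[unfolded invertible_def]] unfolding matrix_inv_def by auto

lemma minv_unique: fixes A B :: "real^'n^'n" assumes "A ** B = mat 1" shows "matrix_inv A = B"
proof -
  have "B ** A = mat 1" using assms matrix_left_right_inverse by blast
  hence inv: "invertible A" using assms invertible_def by blast
  have "matrix_inv A = matrix_inv A ** (A ** B)" using assms by simp
  also have "\<dots> = B" by (simp add: matrix_mul_assoc minv(2)[OF inv])
  finally show ?thesis .
qed

lemma minv_invertible: fixes A :: "real^'n^'n" assumes "invertible A" shows "invertible (matrix_inv A)"
  using minv[OF assms] invertible_def by blast

lemma minv_minv: fixes A :: "real^'n^'n" assumes "invertible A" shows "matrix_inv (matrix_inv A) = A"
  using minv[OF assms] minv_unique by blast

lemma minv_transpose: fixes A :: "real^'n^'n" assumes "invertible A"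
  shows "matrix_inv (transpose A) = transpose (matrix_inv A)"
proof (rule minv_unique)
  show "transpose A ** transpose (matrix_inv A) = mat 1"
    by (metis matrix_transpose_mul minv(2)[OF assms] transpose_mat)
qed

lemma det_minv: fixes A :: "real^'n^'n" assumes "invertible A" shows "det (matrix_inv A) = 1 / det A"
proof -
  have "det A * det (matrix_inv A) = 1" using det_mul[of A "matrix_inv A"] minv[OF assms] by simp
  hence nz: "det A \<noteq> 0" by auto
  thus ?thesis using \<open>det A * det (matrix_inv A) = 1\<close> by (simp add: eq_divide_eq mult.commute)
qed

lemma spd_sym: "spd A \<Longrightarrow> transpose A = A" by (simp add: spd_def)
lemma spd_pos: "spd A \<Longrightarrow> x \<noteq> 0 \<Longrightarrow> x \<bullet> (A *v x) > 0" by (simp add: spd_def)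

lemma spd_invertible: fixes A :: "real^'n^'n" assumes "spd A" shows "invertible A"
proof -
  have "\<forall>x. A *v x = 0 \<longrightarrow> x = 0"
    using spd_pos[OF assms] by (metis inner_zero_right less_irrefl)
  thus ?thesis using invertible_left_inverse matrix_left_invertible_ker by blast
qed

lemma spd_minv: fixes A :: "real^'n^'n" assumes "spd A" shows "spd (matrix_inv A)"
proof -
  have inv: "invertible A" by (rule spd_invertible[OF assms])
  have sym: "transpose (matrix_inv A) = matrix_inv A"
    using minv_transpose[OF inv] spd_sym[OF assms] by simp
  have "x \<bullet> (matrix_inv A *v x) > 0" if "x \<noteq> 0" for x
  proof -
    let ?y = "matrix_inv A *v x"
    have xy: "x = A *v ?y" by (simp add: matrix_vector_mul_assoc minv(1)[OF inv])
    hence "?y \<noteq> 0" using that by auto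
    hence "?y \<bullet> (A *v ?y) > 0" using spd_pos[OF assms] by blast
    thus ?thesis using xy by (metis inner_commute)
  qed
  thus ?thesis using sym by (simp add: spd_def)
qed

lemma spd_congr: fixes A :: "real^'n^'n" and P :: "real^'m^'n"
  assumes "spd A" and "\<And>x. P *v x = 0 \<Longrightarrow> x = 0"
  shows "spd (transpose P ** A ** P)"
proof -
  have "transpose (transpose P ** A ** P) = transpose P ** A ** P"
    using spd_sym[OF assms(1)] by (simp add: matrix_transpose_mul matrix_mul_assoc)
  moreover have "x \<bullet> ((transpose P ** A ** P) *v x) > 0" if "x \<noteq> 0" for x
  proof -
    have "P *v x \<noteq> 0" using assms(2) that by blast
    hence "(P *v x) \<bullet> (A *v (P *v x)) > 0" using spd_pos[OF assms(1)] by blast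
    moreover have "x \<bullet> ((transpose P ** A ** P) *v x) = (P *v x) \<bullet> (A *v (P *v x))"
    proof -
      have "(transpose P ** A ** P) *v x = transpose P *v (A *v (P *v x))"
        by (simp only: matrix_vector_mul_assoc matrix_mul_assoc)
      hence "x \<bullet> ((transpose P ** A ** P) *v x) = (transpose (transpose P) *v x) \<bullet> (A *v (P *v x))"
        by (simp only: dot_transpose)
      thus ?thesis by (simp only: transpose_transpose)
    qed
    ultimately show ?thesis by simp
  qed
  ultimately show ?thesis by (simp add: spd_def)
qed

lemma invertible_inj: fixes P :: "real^'n^'n" assumes "invertible P" shows "P *v x = 0 \<Longrightarrow> x = 0"
  using minv[OF assms] by (metis matrix_vector_mul_assoc matrix_vector_mul_lid matrix_vector_mult_0_right)



lemma mm_scaleR_l: "(k *\<^sub>R (A::real^'n^'m)) ** (B::real^'k^'n) = k *\<^sub>R (A ** B)"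
  by (vector matrix_matrix_mult_def sum_distrib_left mult.assoc)
lemma mm_scaleR_r: "(A::real^'n^'m) ** (k *\<^sub>R (B::real^'k^'n)) = k *\<^sub>R (A ** B)"
  by (vector matrix_matrix_mult_def sum_distrib_left mult.left_commute)

lemma detpoly: fixes C D :: "real^'n^'n" shows "\<exists>Q. \<forall>t. det (C + t *\<^sub>R D) = poly Q t"
proof
  show "\<forall>t. det (C + t *\<^sub>R D) = poly (\<Sum>p\<in>{p. p permutes (UNIV::'n set)}. [:of_int (sign p):] * (\<Prod>i\<in>UNIV. [:C$i$p i, D$i$p i:])) t"
    by (simp add: det_def poly_sum poly_prod algebra_simps)
qed

lemma det_shift_nz: fixes A :: "real^'n^'n" shows "\<exists>t. det (A + t *\<^sub>R mat 1) \<noteq> 0"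
proof -
  obtain K where K: "K > 0" "\<And>x. norm (A *v x) \<le> norm x * K"
    using bounded_linear.pos_bounded[OF matrix_vector_mul_bounded_linear[of A]] by blast
  let ?t = "K + 1"
  have "\<forall>x. (A + ?t *\<^sub>R mat 1) *v x = 0 \<longrightarrow> x = 0"
  proof (intro allI impI)
    fix x assume "(A + ?t *\<^sub>R mat 1) *v x = 0"
    hence "A *v x = - (?t *\<^sub>R x)"
      by (simp add: matrix_vector_mult_add_rdistrib scaleR_matrix_vector_assoc[symmetric] eq_neg_iff_add_eq_0)
    hence "norm (A *v x) = ?t * norm x" using K(1) by simp
    with K(2)[of x] have "?t * norm x \<le> K * norm x" by (simp add: mult.commute)
    hence "norm x \<le> 0" by (simp add: distrib_right)
    thus "x = 0" by simp
  qed
  hence "invertible (A + ?t *\<^sub>R mat 1)"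
    using invertible_left_inverse matrix_left_invertible_ker by blast
  thus ?thesis using invertible_det_nz by blast
qed

lemma sylvester_sq: fixes A B :: "real^'n^'n"
  shows "det (mat 1 + A ** B) = det (mat 1 + B ** A)"
proof -
  obtain P where P: "\<And>t. det (A + t *\<^sub>R mat 1) = poly P t" using detpoly[of A "mat 1"] by blast
  obtain Q1 where Q1: "\<And>t. det ((mat 1 + A ** B) + t *\<^sub>R B) = poly Q1 t" using detpoly by blast
  obtain Q2 where Q2: "\<And>t. det ((mat 1 + B ** A) + t *\<^sub>R B) = poly Q2 t" using detpoly by blast
  obtain t0 where "det (A + t0 *\<^sub>R mat 1) \<noteq> 0" using det_shift_nz by blast
  hence "P \<noteq> 0" using P by (metis poly_0)
  hence fin: "finite {t. poly P t = 0}" by (rule poly_roots_finite)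
  have eq: "poly (Q1 - Q2) t = 0" if "poly P t \<noteq> 0" for t
  proof -
    let ?At = "A + t *\<^sub>R mat 1"
    have d: "det ?At \<noteq> 0" using that P by simp
    have e1: "mat 1 + ?At ** B = (mat 1 + A ** B) + t *\<^sub>R B"
      by (simp add: mm_add_r mm_scaleR_l)
    have e2: "mat 1 + B ** ?At = (mat 1 + B ** A) + t *\<^sub>R B"
      by (simp add: matrix_add_ldistrib mm_scaleR_r)
    have "?At ** (mat 1 + B ** ?At) = (mat 1 + ?At ** B) ** ?At"
      by (simp add: matrix_add_ldistrib mm_add_r matrix_mul_assoc)
    hence "det ?At * det (mat 1 + B ** ?At) = det (mat 1 + ?At ** B) * det ?At"
      by (metis det_mul)
    hence "det (mat 1 + B ** ?At) = det (mat 1 + ?At ** B)" using d by simp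
    thus ?thesis using e1 e2 Q1 Q2 by simp
  qed
  have "Q1 - Q2 = 0"
  proof (rule ccontr)
    assume "Q1 - Q2 \<noteq> 0"
    hence "finite {t. poly (Q1 - Q2) t = 0}" by (rule poly_roots_finite)
    moreover have "UNIV - {t. poly P t = 0} \<subseteq> {t. poly (Q1 - Q2) t = 0}" using eq by auto
    ultimately have "finite (UNIV - {t. poly P t = 0})" by (rule finite_subset[rotated])
    hence "finite (UNIV :: real set)" using fin by (metis Diff_infinite_finite)
    thus False using infinite_UNIV_char_0 by blast
  qed
  hence "poly Q1 0 = poly Q2 0" by (metis eq_iff_diff_eq_0)
  thus ?thesis using Q1[of 0] Q2[of 0] by simp
qed



lemma sum_inj_delta: fixes \<iota> :: "'d::finite \<Rightarrow> 'p" assumes "inj \<iota>"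
  shows "(\<Sum>a\<in>UNIV. if i = \<iota> a then f a else (0::real)) = (if i \<in> range \<iota> then f (inv \<iota> i) else 0)"
proof (cases "i \<in> range \<iota>")
  case True
  then obtain a0 where a0: "i = \<iota> a0" by blast
  have "(\<Sum>a\<in>UNIV. if i = \<iota> a then f a else (0::real)) = (\<Sum>a\<in>UNIV. if a0 = a then f a else 0)"
    using assms a0 by (intro sum.cong) (auto simp: inj_eq)
  also have "\<dots> = f a0" by simp
  finally show ?thesis using True a0 assms by simp
next
  case False
  hence "\<forall>a. i \<noteq> \<iota> a" by auto
  thus ?thesis using False by simp
qed

lemma ext_entries: fixes W :: "real^'d^'d" and \<iota> :: "'d \<Rightarrow> 'p::finite" assumes "inj \<iota>"
  defines "J \<equiv> (\<chi> i a. if i = \<iota> a then 1 else 0) :: real^'d^'p"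
  shows "(J ** W ** transpose J)$i$j = (if i \<in> range \<iota> \<and> j \<in> range \<iota> then W $ inv \<iota> i $ inv \<iota> j else 0)"
proof -
  have JW: "(J ** W)$i$b = (if i \<in> range \<iota> then W $ inv \<iota> i $ b else 0)" for i b
  proof -
    have "(J ** W)$i$b = (\<Sum>a\<in>UNIV. if i = \<iota> a then W$a$b else 0)"
      unfolding J_def matrix_matrix_mult_def by (simp, intro sum.cong, auto)
    thus ?thesis using sum_inj_delta[OF assms(1), of i "\<lambda>a. W$a$b"] by simp
  qed
  have "(J ** W ** transpose J)$i$j = (\<Sum>b\<in>UNIV. if j = \<iota> b then (J ** W)$i$b else 0)"
    unfolding matrix_matrix_mult_def transpose_def J_def by (simp add: if_distrib cong: if_cong)
  also have "\<dots> = (if j \<in> range \<iota> then (J ** W)$i$(inv \<iota> j) else 0)"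
    by (rule sum_inj_delta[OF assms(1)])
  finally show ?thesis using JW by simp
qed

lemma det_ext: fixes W :: "real^'d^'d" and \<iota> :: "'d \<Rightarrow> 'p::finite" assumes inj: "inj \<iota>"
  defines "J \<equiv> (\<chi> i a. if i = \<iota> a then 1 else 0) :: real^'d^'p"
  shows "det (mat 1 + J ** W ** transpose J) = det (mat 1 + W)"
proof -
  define R where "R = range \<iota>"
  define E where "E = mat 1 + J ** W ** transpose J"
  define W1 where "W1 = mat 1 + W"
  have E: "E$i$j = (if i = j then 1 else 0) + (if i \<in> R \<and> j \<in> R then W $ inv \<iota> i $ inv \<iota> j else 0)" for i j
    unfolding E_def R_def J_def using ext_entries[OF inj, of W i j] by (simp add: mat_def J_def)
  have W1: "W1$a$b = (if a = b then 1 else 0) + W$a$b" for a b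
    unfolding W1_def by (simp add: mat_def)
  define g where "g = (\<lambda>p. of_int (sign p) * (\<Prod>i\<in>UNIV. E$i$p i))"
  have fin: "finite {p. p permutes (UNIV::'p set)}" by (simp add: finite_permutations)
  have sub: "{p. p permutes R} \<subseteq> {p. p permutes (UNIV::'p set)}"
    by (auto intro: permutes_subset)
  have zero: "g p = 0" if "p \<in> {p. p permutes (UNIV::'p set)} - {p. p permutes R}" for p
  proof -
    from that have pU: "p permutes UNIV" and pR: "\<not> p permutes R" by auto
    have "\<exists>i. i \<notin> R \<and> p i \<noteq> i"
    proof (rule ccontr)
      assume "\<not> ?thesis"
      hence "\<forall>i. i \<notin> R \<longrightarrow> p i = i" by blast
      hence "p permutes R" using pU unfolding permutes_def by blast
      thus False using pR by blast
    qed
    then obtain i where i: "i \<notin> R" "p i \<noteq> i" by blast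
    hence "E$i$p i = 0" using E by auto
    thus ?thesis unfolding g_def by (simp add: prod_zero_iff) (use i in blast)
  qed
  have "det E = sum g {p. p permutes (UNIV::'p set)}" unfolding det_def g_def ..
  also have "\<dots> = sum g {p. p permutes R}"
    by (rule sum.mono_neutral_right[OF fin sub]) (use zero in blast)
  also have "\<dots> = sum (\<lambda>t. g (map_permutation UNIV \<iota> t)) {t. t permutes (UNIV::'d set)}"
  proof (rule sum.reindex_bij_betw[symmetric])
    have bijR: "bij_betw \<iota> UNIV R" using inj unfolding R_def by (simp add: bij_betw_def)
    have bijR': "bij_betw (inv \<iota>) R UNIV" using bijR R_def by (simp add: bij_betw_inv_into)
    show "bij_betw (map_permutation UNIV \<iota>) {t. t permutes (UNIV::'d set)} {p. p permutes R}"
    proof (rule bij_betw_byWitness[where f'="map_permutation R (inv \<iota>)"])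
      show "\<forall>a\<in>{t. t permutes UNIV}. map_permutation R (inv \<iota>) (map_permutation UNIV \<iota> a) = a"
        using map_permutation_compose_inv[OF bijR] inj by auto
      show "\<forall>a\<in>{p. p permutes R}. map_permutation UNIV \<iota> (map_permutation R (inv \<iota>) a) = a"
        using map_permutation_compose_inv[OF bijR'] unfolding R_def by (auto simp: f_inv_into_f)
      show "map_permutation UNIV \<iota> ` {t. t permutes UNIV} \<subseteq> {p. p permutes R}"
        using map_permutation_permutes[OF bijR] by auto
      show "map_permutation R (inv \<iota>) ` {p. p permutes R} \<subseteq> {t. t permutes UNIV}"
        using map_permutation_permutes[OF bijR'] by auto
    qed
  qed
  also have "\<dots> = sum (\<lambda>t. of_int (sign t) * (\<Prod>a\<in>UNIV. W1$a$t a)) {t. t permutes (UNIV::'d set)}"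
  proof (rule sum.cong[OF refl])
    fix t assume "t \<in> {t. t permutes (UNIV::'d set)}"
    hence t: "t permutes UNIV" by simp
    define s where "s = map_permutation UNIV \<iota> t"
    have bijR: "bij_betw \<iota> UNIV R" using inj unfolding R_def by (simp add: bij_betw_def)
    have sR: "s permutes R" unfolding s_def by (rule map_permutation_permutes[OF bijR t])
    have sign: "sign s = sign t" unfolding s_def
      by (rule sign_map_permutation) (use inj t in auto)
    have sapp: "s (\<iota> a) = \<iota> (t a)" for a
      unfolding s_def by (rule map_permutation_apply) (use inj in auto)
    have "(\<Prod>i\<in>UNIV. E$i$s i) = (\<Prod>i\<in>R. E$i$s i)"
    proof (rule prod.mono_neutral_right)
      show "\<forall>i\<in>UNIV - R. E$i$s i = 1" using E permutes_not_in[OF sR] by auto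
    qed auto
    also have "\<dots> = (\<Prod>a\<in>UNIV. E$(\<iota> a)$s (\<iota> a))"
      unfolding R_def by (rule prod.reindex[OF inj[unfolded inj_on_def[symmetric]], unfolded comp_def])
    also have "\<dots> = (\<Prod>a\<in>UNIV. W1$a$t a)"
      by (rule prod.cong[OF refl]) (simp add: sapp E W1 R_def inj inj_eq)
    finally show "g s = of_int (sign t) * (\<Prod>a\<in>UNIV. W1$a$t a)"
      unfolding g_def sign by simp
  qed
  also have "\<dots> = det W1" unfolding det_def ..
  finally show ?thesis unfolding E_def W1_def .
qed



lemma sylvester: fixes U :: "real^'d^'p" and V :: "real^'p^'d" assumes "CARD('d) \<le> CARD('p)"
  shows "det (mat 1 + U ** V) = det (mat 1 + V ** U)"
proof -
  obtain \<iota> :: "'d \<Rightarrow> 'p" where inj: "inj \<iota>"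
    using card_le_inj[of "UNIV::'d set" "UNIV::'p set"] assms by auto
  define J :: "real^'d^'p" where "J = (\<chi> i a. if i = \<iota> a then 1 else 0)"
  have JJ: "transpose J ** J = mat 1"
  proof -
    have "(transpose J ** J)$a$b = (if a = b then 1 else 0)" for a b
    proof -
      have "(transpose J ** J)$a$b = (\<Sum>k\<in>UNIV. (if k = \<iota> a then 1 else 0) * (if k = \<iota> b then 1 else (0::real)))"
        unfolding J_def matrix_matrix_mult_def transpose_def by simp
      also have "\<dots> = (\<Sum>k\<in>UNIV. if k = \<iota> a then (if \<iota> a = \<iota> b then 1 else 0) else (0::real))"
        by (rule sum.cong) auto
      also have "\<dots> = (if \<iota> a = \<iota> b then 1 else 0)" by simp
      finally show ?thesis using inj by (simp add: inj_eq)
    qed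
    thus ?thesis by (simp add: vec_eq_iff mat_def)
  qed
  have "det (mat 1 + V ** U) = det (mat 1 + J ** (V ** U) ** transpose J)"
    using det_ext[OF inj, of "V ** U"] unfolding J_def by simp
  also have "\<dots> = det (mat 1 + (J ** V) ** (U ** transpose J))"
    by (simp add: matrix_mul_assoc)
  also have "\<dots> = det (mat 1 + (U ** transpose J) ** (J ** V))" by (rule sylvester_sq)
  also have "(U ** transpose J) ** (J ** V) = U ** V"
    by (metis JJ matrix_mul_assoc matrix_mul_rid)
  finally show ?thesis ..
qed



definition outer :: "real^'n \<Rightarrow> real^'m \<Rightarrow> real^'m^'n" where
  "outer u w = (\<chi> i j. u$i * w$j)"

lemma outer_eq: "outer u w = (columnvector u :: real^1^'n) ** (rowvector w :: real^'m^1)"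
  by (simp add: vec_eq_iff outer_def matrix_matrix_mult_def columnvector_def rowvector_def UNIV_1)

lemma mm_outer_l: "(A::real^'n^'m) ** outer u w = outer (A *v u) w"
  by (simp add: vec_eq_iff outer_def matrix_matrix_mult_def matrix_vector_mult_def sum_distrib_left sum_distrib_right ac_simps)
lemma mm_outer_r: "outer u w ** (A::real^'m^'n) = outer u (transpose A *v w)"
  by (simp add: vec_eq_iff outer_def matrix_matrix_mult_def matrix_vector_mult_def transpose_def sum_distrib_left ac_simps)
lemma outer_outer: "outer a (b::real^'n) ** outer c d = (b \<bullet> c) *\<^sub>R outer a d"
  by (simp add: vec_eq_iff outer_def matrix_matrix_mult_def inner_vec_def sum_distrib_left sum_distrib_right ac_simps)
lemma outer_mv: "outer u w *v x = (w \<bullet> x) *\<^sub>R u"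
  by (simp add: vec_eq_iff outer_def matrix_vector_mult_def inner_vec_def sum_distrib_left ac_simps)
lemma outer_add_l: "outer (a + b) w = outer a w + outer b w"
  by (simp add: vec_eq_iff outer_def algebra_simps)
lemma outer_scaleR_l: "outer (c *\<^sub>R a) w = c *\<^sub>R outer a w"
  by (simp add: vec_eq_iff outer_def algebra_simps)
lemma transpose_outer: "transpose (outer u w) = outer w u"
  by (vector outer_def transpose_def)

lemma det_rank1: fixes u w :: "real^'n" shows "det (mat 1 + outer u w) = 1 + w \<bullet> u"
proof -
  have "det (mat 1 + outer u w) = det (mat 1 + (columnvector u :: real^1^'n) ** rowvector w)"
    by (simp add: outer_eq)
  also have "\<dots> = det (mat 1 + (rowvector w :: real^'n^1) ** columnvector u)"
    by (rule sylvester) simp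
  also have "\<dots> = 1 + w \<bullet> u"
    by (simp add: det_1 mat_def matrix_matrix_mult_def rowvector_def columnvector_def inner_vec_def)
  finally show ?thesis .
qed

lemma spd_entry_pos: fixes M :: "real^'n^'n" assumes "spd M" shows "M$k$k > 0"
proof -
  have "axis k 1 \<bullet> (M *v axis k 1) > 0" using spd_pos[OF assms, of "axis k (1::real)"] by (simp add: axis_eq_0_iff)
  moreover have "(M *v axis k 1)$k = M$k$k"
    by (simp add: matrix_vector_mult_def axis_def if_distrib cong: if_cong)
  ultimately show ?thesis by (simp add: inner_axis')
qed

lemma spd_symE: assumes "spd M" shows "M$i$j = M$j$i"
proof -
  have "transpose M $ i $ j = M $ j $ i" by (simp add: transpose_def)
  thus ?thesis using spd_sym[OF assms] by simp
qed

lemma diag_claim: fixes M :: "real^'n^'n"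
  assumes "finite K"
  shows "spd M \<Longrightarrow> (\<forall>i j. i \<notin> K \<longrightarrow> j \<noteq> i \<longrightarrow> M$i$j = 0) \<Longrightarrow>
    \<exists>T. det T = 1 \<and> (\<forall>i j. i \<noteq> j \<longrightarrow> (transpose T ** M ** T)$i$j = 0) \<and> (\<forall>i. (transpose T ** M ** T)$i$i \<le> M$i$i)"
  using assms
proof (induction K arbitrary: M rule: finite_induct)
  case empty
  show ?case by (rule exI[of _ "mat 1"]) (use empty in auto)
next
  case (insert k K)
  define m where "m = M$k$k"
  define v where "v = (\<chi> i. M$i$k)"
  define e where "e = (axis k 1 :: real^'n)"
  define w where "w = e - (1/m) *\<^sub>R v"
  define T1 where "T1 = mat 1 + outer e w"
  define M1 where "M1 = transpose T1 ** M ** T1"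
  have m: "m > 0" unfolding m_def using spd_entry_pos[OF insert.prems(1)] .
  have sym: "\<And>i j. M$i$j = M$j$i" using spd_symE[OF insert.prems(1)] .
  have Mv: "M *v e = v" unfolding e_def v_def
    by (simp add: vec_eq_iff matrix_vector_mult_def axis_def if_distrib cong: if_cong)
  have Mtv: "transpose M *v e = v" using Mv spd_sym[OF insert.prems(1)] by simp
  have Mtv2: "e v* M = v" using Mtv by simp
  have ve: "v \<bullet> e = m" unfolding e_def v_def m_def by (simp add: inner_axis)
  have detT1: "det T1 = 1" unfolding T1_def det_rank1
  proof -
    have "w \<bullet> e = e \<bullet> e - (1/m) * (v \<bullet> e)" by (simp add: w_def inner_diff_left)
    also have "e \<bullet> e = 1" by (simp add: e_def inner_axis_axis)
    finally show "1 + w \<bullet> e = 1" using ve m by simp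
  qed
  have M1eq: "M1 = M + outer v w + outer w v + m *\<^sub>R outer w w"
  proof -
    have "M1 = (mat 1 + outer w e) ** M ** (mat 1 + outer e w)"
      unfolding M1_def T1_def by (simp add: transpose_add transpose_outer)
    also have "\<dots> = M + outer v w + outer w v + m *\<^sub>R outer w w"
    proof -
      have 1: "(mat 1 + outer w e) ** M = M + outer w v" by (simp add: mm_add_r mm_outer_r Mtv2)
      have 2: "(M + outer w v) ** (mat 1 + outer e w) = M + outer v w + (outer w v + m *\<^sub>R outer w w)"
      proof -
        have "(M + outer w v) *v e = v + m *\<^sub>R w"
          by (simp add: matrix_vector_mult_add_rdistrib outer_mv Mv ve)
        thus ?thesis by (simp add: matrix_add_ldistrib mm_outer_l outer_add_l outer_scaleR_l add_ac)
      qed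
      show ?thesis unfolding 1 2 by (simp add: add_ac)
    qed
    finally show ?thesis .
  qed
  have M1e: "M1$i$j = M$i$j - v$i * v$j / m + (if i = k \<and> j = k then m else 0)" for i j
    unfolding M1eq using m
    by (cases "i = k"; cases "j = k") (simp_all add: outer_def w_def e_def axis_def field_simps)
  have vk: "v$k = m" unfolding v_def m_def by simp
  have invT1: "invertible T1" using detT1 by (simp add: invertible_det_nz)
  have spdM1: "spd M1" unfolding M1_def
    by (rule spd_congr[OF insert.prems(1)]) (use invertible_inj[OF invT1] in blast)
  have iso: "\<forall>i j. i \<notin> K \<longrightarrow> j \<noteq> i \<longrightarrow> M1$i$j = 0"
  proof (intro allI impI)
    fix i j assume i: "i \<notin> K" and ji: "j \<noteq> i"
    show "M1$i$j = 0"
    proof (cases "i = k")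
      case True
      thus ?thesis using M1e[of i j] ji vk m sym[of k j] by (simp add: v_def)
    next
      case False
      hence "M$i$j = 0" "v$i = 0" using insert.prems(2) i ji by (auto simp: v_def)
      thus ?thesis using M1e[of i j] False by simp
    qed
  qed
  obtain T2 where T2: "det T2 = 1" "\<forall>i j. i \<noteq> j \<longrightarrow> (transpose T2 ** M1 ** T2)$i$j = 0"
    "\<forall>i. (transpose T2 ** M1 ** T2)$i$i \<le> M1$i$i"
    using insert.IH[OF spdM1 iso] by blast
  have eqT: "transpose (T1 ** T2) ** M ** (T1 ** T2) = transpose T2 ** M1 ** T2"
    unfolding M1_def by (simp add: matrix_transpose_mul matrix_mul_assoc)
  have dle: "M1$i$i \<le> M$i$i" for i
  proof (cases "i = k")
    case True
    have "m*m/m = m" using m by simp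
    thus ?thesis using M1e[of i i] True vk by simp
  next
    case False
    have "(v$i)*(v$i)/m \<ge> 0" using m by simp
    thus ?thesis using M1e[of i i] False by simp
  qed
  show ?case
    apply (rule exI[of _ "T1 ** T2"])
    using T2 detT1 dle eqT by (auto simp: det_mul intro: order_trans)
qed

lemma spd_diag: fixes M :: "real^'n^'n" assumes "spd M"
  shows "\<exists>T. det T = 1 \<and> (\<forall>i j. i \<noteq> j \<longrightarrow> (transpose T ** M ** T)$i$j = 0)
     \<and> (\<forall>i. 0 < (transpose T ** M ** T)$i$i \<and> (transpose T ** M ** T)$i$i \<le> M$i$i)"
proof -
  obtain T where T: "det T = 1" "\<forall>i j. i \<noteq> j \<longrightarrow> (transpose T ** M ** T)$i$j = 0"
    "\<forall>i. (transpose T ** M ** T)$i$i \<le> M$i$i"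
    using diag_claim[of UNIV M] assms by auto
  have "invertible T" using T(1) by (simp add: invertible_det_nz)
  hence "spd (transpose T ** M ** T)"
    using spd_congr[OF assms] invertible_inj by blast
  hence "\<forall>i. 0 < (transpose T ** M ** T)$i$i" using spd_entry_pos by blast
  thus ?thesis using T by blast
qed

lemma det_congr1: fixes M T :: "real^'n^'n" assumes "det T = 1"
  shows "det (transpose T ** M ** T) = det M"
  using assms by (simp add: det_mul)

lemma spd_det_pos: fixes M :: "real^'n^'n" assumes "spd M" shows "det M > 0"
proof -
  obtain T where T: "det T = 1" "\<forall>i j. i \<noteq> j \<longrightarrow> (transpose T ** M ** T)$i$j = 0"
     "\<forall>i. 0 < (transpose T ** M ** T)$i$i \<and> (transpose T ** M ** T)$i$i \<le> M$i$i"
    using spd_diag[OF assms] by blast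
  have "det M = (\<Prod>i\<in>UNIV. (transpose T ** M ** T)$i$i)"
    using det_congr1[OF T(1), of M] det_diagonal[of "transpose T ** M ** T"] T(2) by simp
  thus ?thesis using T(3) by (simp add: prod_pos)
qed

lemma hadamard: fixes M :: "real^'n^'n" assumes "spd M" shows "det M \<le> (\<Prod>i\<in>UNIV. M$i$i)"
proof -
  obtain T where T: "det T = 1" "\<forall>i j. i \<noteq> j \<longrightarrow> (transpose T ** M ** T)$i$j = 0"
     "\<forall>i. 0 < (transpose T ** M ** T)$i$i \<and> (transpose T ** M ** T)$i$i \<le> M$i$i"
    using spd_diag[OF assms] by blast
  have "det M = (\<Prod>i\<in>UNIV. (transpose T ** M ** T)$i$i)"
    using det_congr1[OF T(1), of M] det_diagonal[of "transpose T ** M ** T"] T(2) by simp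
  also have "\<dots> \<le> (\<Prod>i\<in>UNIV. M$i$i)"
    by (rule prod_mono) (use T(3) in \<open>auto intro: less_imp_le\<close>)
  finally show ?thesis .
qed

lemma logdet_trace: fixes M :: "real^'n^'n" assumes "spd M"
  shows "ln (det M) \<le> trace M - real CARD('n)"
proof -
  have pos: "\<And>i. M$i$i > 0" using spd_entry_pos[OF assms] .
  have "ln (det M) \<le> ln (\<Prod>i\<in>UNIV. M$i$i)"
    using hadamard[OF assms] spd_det_pos[OF assms] by simp
  also have "\<dots> = (\<Sum>i\<in>UNIV. ln (M$i$i))" proof (rule ln_prod)
    fix i :: 'n show "M$i$i \<noteq> 0" using pos[of i] by linarith
  qed simp
  also have "\<dots> \<le> (\<Sum>i\<in>UNIV. M$i$i - 1)" by (rule sum_mono) (use pos ln_le_minus_one in blast)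
  also have "\<dots> = trace M - real CARD('n)" by (simp add: trace_def sum_subtractf)
  finally show ?thesis .
qed



definition diagm :: "('n \<Rightarrow> real) \<Rightarrow> real^'n^'n" where
  "diagm f = (\<chi> i j. if i = j then f i else 0)"

lemma diagm_mult_l: "(diagm f ** A)$i$j = f i * A$i$j"
  by (simp add: diagm_def matrix_matrix_mult_def if_distrib if_distribR cong: if_cong)
lemma diagm_mult_r: "(A ** diagm f)$i$j = A$i$j * f j"
  by (simp add: diagm_def matrix_matrix_mult_def if_distrib if_distribR cong: if_cong)
lemma transpose_diagm: "transpose (diagm f) = diagm f"
  by (simp add: vec_eq_iff diagm_def transpose_def)

lemma BI: fixes L S :: "real^'n^'n" assumes L: "spd L" and S: "spd S"
  shows "ln (det S) + real CARD('n) \<le> ln (det L) + trace (matrix_inv L ** S)"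
proof -
  obtain T where T: "det T = 1" "\<forall>i j. i \<noteq> j \<longrightarrow> (transpose T ** L ** T)$i$j = 0"
     "\<forall>i. 0 < (transpose T ** L ** T)$i$i \<and> (transpose T ** L ** T)$i$i \<le> L$i$i"
    using spd_diag[OF L] by blast
  define D where "D = transpose T ** L ** T"
  define G where "G = diagm (\<lambda>i. 1 / sqrt (D$i$i))"
  define Lf where "Lf = T ** G"
  have LfL: "transpose Lf ** L ** Lf = mat 1"
  proof -
    have "transpose Lf ** L ** Lf = G ** D ** G"
      unfolding Lf_def D_def G_def by (simp add: matrix_transpose_mul transpose_diagm matrix_mul_assoc)
    also have "\<dots> = mat 1"
    proof -
      have "(G ** D ** G)$i$j = (if i = j then 1 else 0)" for i j
      proof -
        have pos: "D$i$i > 0" using T(3) D_def by simp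
        have "(G ** D ** G)$i$j = 1 / sqrt (D$i$i) * D$i$j * (1 / sqrt (D$j$j))"
          unfolding G_def by (simp add: diagm_mult_l diagm_mult_r)
        thus ?thesis using T(2) pos unfolding D_def by (auto simp: field_simps)
      qed
      thus ?thesis by (simp add: vec_eq_iff mat_def)
    qed
    finally show ?thesis .
  qed
  have detLf: "det Lf * det L * det Lf = 1"
    using arg_cong[OF LfL, of det] by (simp add: det_mul)
  hence "det Lf \<noteq> 0" by auto
  hence invLf: "invertible Lf" "invertible (transpose Lf)" by (simp_all add: invertible_det_nz)
  have X: "L ** (Lf ** transpose Lf) = mat 1"
  proof -
    have "transpose Lf ** (L ** (Lf ** transpose Lf)) = transpose Lf"
      using LfL by (metis matrix_mul_assoc matrix_mul_lid)
    hence "matrix_inv (transpose Lf) ** (transpose Lf ** (L ** (Lf ** transpose Lf))) = matrix_inv (transpose Lf) ** transpose Lf"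
      by simp
    thus ?thesis by (simp add: matrix_mul_assoc minv(2)[OF invLf(2)])
  qed
  have Linv: "matrix_inv L = Lf ** transpose Lf" using minv_unique[OF X] .
  define Mm where "Mm = transpose Lf ** S ** Lf"
  have spdM: "spd Mm" unfolding Mm_def
    by (rule spd_congr[OF S]) (use invertible_inj[OF invLf(1)] in blast)
  have tr: "trace (matrix_inv L ** S) = trace Mm"
    unfolding Linv Mm_def
    by (metis matrix_mul_assoc trace_mul_sym)
  have dL: "det L > 0" "det S > 0" using spd_det_pos L S by auto
  have dM: "det Mm = det S / det L"
  proof -
    have "det Mm = det Lf * det S * det Lf" unfolding Mm_def by (simp add: det_mul)
    thus ?thesis using detLf dL by (simp add: field_simps)
  qed
  have "ln (det Mm) \<le> trace Mm - real CARD('n)" by (rule logdet_trace[OF spdM])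
  thus ?thesis using dM dL tr by (simp add: ln_divide_pos)
qed



lemma quad_congr: "(x::real^'n) \<bullet> ((transpose P ** B ** P) *v x) = (P *v x) \<bullet> (B *v (P *v x))"
proof -
  have "(transpose P ** B ** P) *v x = transpose P *v (B *v (P *v x))"
    by (simp only: matrix_vector_mul_assoc matrix_mul_assoc)
  hence "x \<bullet> ((transpose P ** B ** P) *v x) = (transpose (transpose P) *v x) \<bullet> (B *v (P *v x))"
    by (simp only: dot_transpose)
  thus ?thesis by (simp only: transpose_transpose)
qed

lemma sym_dot: assumes "transpose A = (A::real^'n^'n)" shows "(A *v x) \<bullet> y = x \<bullet> (A *v y)"
  using dot_transpose[of x A y] assms by (simp add: inner_commute)

lemma spd_minv_sym: "spd A \<Longrightarrow> transpose (matrix_inv A) = matrix_inv A"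
  using spd_minv spd_sym by blast

lemma cons_lemma:
  fixes \<alpha> :: "real^'d^'p" and \<Delta> :: "real^'p^'p" and X :: "real^'d^'d"
  assumes dp: "CARD('d) \<le> CARD('p)" and orth: "transpose \<alpha> ** \<alpha> = mat 1"
    and D: "spd \<Delta>" and X: "spd X"
  defines "A \<equiv> transpose \<alpha> ** \<Delta> ** \<alpha>"
  defines "N \<equiv> matrix_inv \<Delta> - \<alpha> ** matrix_inv A ** transpose \<alpha> + \<alpha> ** matrix_inv X ** transpose \<alpha>"
  shows "spd N" "transpose \<alpha> ** matrix_inv N ** \<alpha> = X"
    "det (matrix_inv N) * det A = det \<Delta> * det X"
proof -
  have inj\<alpha>: "\<alpha> *v x = 0 \<Longrightarrow> x = 0" for x
    using orth by (metis matrix_vector_mul_assoc matrix_vector_mul_lid matrix_vector_mult_0_right)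
  have A: "spd A" unfolding A_def by (rule spd_congr[OF D inj\<alpha>])
  have invD: "invertible \<Delta>" and invA: "invertible A" and invX: "invertible X"
    using spd_invertible D A X by auto
  define Di where "Di = matrix_inv \<Delta>"
  define Ai where "Ai = matrix_inv A"
  define Xi where "Xi = matrix_inv X"
  have Di: "spd Di" "transpose Di = Di" using spd_minv[OF D] spd_minv_sym[OF D] Di_def by auto
  have Ai: "spd Ai" "transpose Ai = Ai" using spd_minv[OF A] spd_minv_sym[OF A] Ai_def by auto
  have Xi: "spd Xi" "transpose Xi = Xi" using spd_minv[OF X] spd_minv_sym[OF X] Xi_def by auto
  have Nd: "N = Di - \<alpha> ** Ai ** transpose \<alpha> + \<alpha> ** Xi ** transpose \<alpha>"
    unfolding N_def Di_def Ai_def Xi_def ..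
  have symD: "transpose \<Delta> = \<Delta>" using spd_sym[OF D] .
  have symN: "transpose N = N"
    unfolding Nd by (simp only: transpose_add transpose_sub matrix_transpose_mul transpose_transpose Di(2) Ai(2) Xi(2) matrix_mul_assoc)
  have qa: "x \<bullet> ((\<alpha> ** B ** transpose \<alpha>) *v x) = (transpose \<alpha> *v x) \<bullet> (B *v (transpose \<alpha> *v x))" for x B
    using quad_congr[of x "transpose \<alpha>" B] by simp
  have ineq: "x \<bullet> (Di *v x) \<ge> (transpose \<alpha> *v x) \<bullet> (Ai *v (transpose \<alpha> *v x))" for x
  proof -
    define u where "u = transpose \<alpha> *v x"
    define y where "y = Ai *v u"
    define z where "z = x - \<Delta> *v (\<alpha> *v y)"
    have DDi: "\<Delta> ** Di = mat 1" "Di ** \<Delta> = mat 1" using minv[OF invD] Di_def by auto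
    have AAi: "A ** Ai = mat 1" using minv[OF invA] Ai_def by auto
    have Diz: "Di *v z = Di *v x - \<alpha> *v y"
      unfolding z_def by (simp add: matrix_vector_mult_diff_distrib matrix_vector_mul_assoc matrix_mul_assoc DDi)
    have e1: "x \<bullet> (\<alpha> *v y) = u \<bullet> y" unfolding u_def by (simp add: dot_transpose)
    have e2: "(\<Delta> *v (\<alpha> *v y)) \<bullet> (Di *v x) = y \<bullet> u"
    proof -
      have "(\<Delta> *v (\<alpha> *v y)) \<bullet> (Di *v x) = (\<alpha> *v y) \<bullet> (\<Delta> *v (Di *v x))"
        by (rule sym_dot[OF symD])
      also have "\<Delta> *v (Di *v x) = x" by (simp add: matrix_vector_mul_assoc DDi)
      finally show ?thesis using e1 by (simp add: inner_commute)
    qed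
    have e3: "(\<Delta> *v (\<alpha> *v y)) \<bullet> (\<alpha> *v y) = y \<bullet> u"
    proof -
      have "(\<Delta> *v (\<alpha> *v y)) \<bullet> (\<alpha> *v y) = (\<alpha> *v y) \<bullet> (\<Delta> *v (\<alpha> *v y))" by (simp add: inner_commute)
      also have "\<dots> = y \<bullet> (A *v y)" unfolding A_def using quad_congr[of y \<alpha> \<Delta>] by simp
      also have "A *v y = u" unfolding y_def by (simp add: matrix_vector_mul_assoc AAi)
      finally show ?thesis .
    qed
    have "0 \<le> z \<bullet> (Di *v z)"
    proof (cases "z = 0")
      case True thus ?thesis by simp
    next
      case False thus ?thesis using spd_pos[OF Di(1) False] by simp
    qed
    also have "z \<bullet> (Di *v z) = x \<bullet> (Di *v x) - u \<bullet> y"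
    proof -
      have "z \<bullet> (Di *v z) = (x \<bullet> (Di *v x) - x \<bullet> (\<alpha> *v y)) - ((\<Delta> *v (\<alpha> *v y)) \<bullet> (Di *v x) - (\<Delta> *v (\<alpha> *v y)) \<bullet> (\<alpha> *v y))"
        unfolding Diz unfolding z_def by (simp only: inner_diff_left inner_diff_right)
      thus ?thesis unfolding e1 e2 e3 by (simp add: inner_commute)
    qed
    finally show ?thesis unfolding y_def u_def by simp
  qed
  show "spd N"
  proof -
    have "x \<bullet> (N *v x) > 0" if "x \<noteq> 0" for x
    proof -
      define u where "u = transpose \<alpha> *v x"
      have "N *v x = Di *v x - (\<alpha> ** Ai ** transpose \<alpha>) *v x + (\<alpha> ** Xi ** transpose \<alpha>) *v x"
        unfolding Nd by (simp only: matrix_vector_mult_add_rdistrib matrix_vector_mult_diff_rdistrib)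
      hence "x \<bullet> (N *v x) = x \<bullet> (Di *v x) - x \<bullet> ((\<alpha> ** Ai ** transpose \<alpha>) *v x) + x \<bullet> ((\<alpha> ** Xi ** transpose \<alpha>) *v x)"
        by (simp only: inner_add_right inner_diff_right)
      hence q: "x \<bullet> (N *v x) = x \<bullet> (Di *v x) - u \<bullet> (Ai *v u) + u \<bullet> (Xi *v u)"
        unfolding u_def qa .
      show ?thesis
      proof (cases "u = 0")
        case True
        thus ?thesis using q spd_pos[OF Di(1) that] by simp
      next
        case False
        thus ?thesis using q spd_pos[OF Xi(1) False] ineq[of x] unfolding u_def by simp
      qed
    qed
    thus ?thesis using symN by (simp add: spd_def)
  qed
  hence invN: "invertible N" by (rule spd_invertible)
  define L where "L = matrix_inv N"
  have LN: "L ** N = mat 1" using minv[OF invN] L_def by simp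
  have NDa: "N ** \<Delta> ** \<alpha> = \<alpha> ** Xi ** A"
  proof -
    have DDi: "Di ** \<Delta> = mat 1" using minv[OF invD] Di_def by auto
    have AiA: "Ai ** A = mat 1" using minv[OF invA] Ai_def by auto
    have "N ** \<Delta> ** \<alpha> = Di ** \<Delta> ** \<alpha> - \<alpha> ** (Ai ** A) + \<alpha> ** (Xi ** A)"
      unfolding Nd A_def by (simp add: mm_add_r mm_sub_r matrix_mul_assoc)
    thus ?thesis using DDi AiA by (simp add: matrix_mul_assoc)
  qed
  have Da: "\<Delta> ** \<alpha> = L ** \<alpha> ** Xi ** A"
  proof -
    have "L ** (N ** \<Delta> ** \<alpha>) = \<Delta> ** \<alpha>" by (simp add: matrix_mul_assoc LN)
    thus ?thesis using NDa by (simp add: matrix_mul_assoc)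
  qed
  show "transpose \<alpha> ** matrix_inv N ** \<alpha> = X"
  proof -
    have XiX: "Xi ** X = mat 1" using minv[OF invX] Xi_def by auto
    have AAi: "A ** Ai = mat 1" using minv[OF invA] Ai_def by auto
    have "A = transpose \<alpha> ** (\<Delta> ** \<alpha>)" unfolding A_def by (simp only: matrix_mul_assoc)
    also have "\<dots> = transpose \<alpha> ** (L ** \<alpha> ** Xi ** A)" using Da by simp
    also have "\<dots> = (transpose \<alpha> ** L ** \<alpha>) ** Xi ** A" by (simp only: matrix_mul_assoc)
    finally have h: "A = (transpose \<alpha> ** L ** \<alpha>) ** Xi ** A" .
    have "X = (A ** Ai) ** X" using AAi by simp
    also have "\<dots> = ((transpose \<alpha> ** L ** \<alpha>) ** Xi ** A) ** Ai ** X" using h by simp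
    also have "\<dots> = ((transpose \<alpha> ** L ** \<alpha>) ** Xi) ** ((A ** Ai) ** X)" by (simp only: matrix_mul_assoc)
    also have "\<dots> = (transpose \<alpha> ** L ** \<alpha>) ** (Xi ** X)" using AAi by (simp only: matrix_mul_assoc matrix_mul_lid)
    also have "\<dots> = transpose \<alpha> ** L ** \<alpha>" using XiX by simp
    finally show ?thesis using L_def by simp
  qed
  show "det (matrix_inv N) * det A = det \<Delta> * det X"
  proof -
    have DDi: "\<Delta> ** Di = mat 1" using minv[OF invD] Di_def by auto
    have AiA: "Ai ** A = mat 1" using minv[OF invA] Ai_def by auto
    have l: "\<Delta> ** N = \<Delta> ** Di - \<Delta> ** \<alpha> ** Ai ** transpose \<alpha> + \<Delta> ** \<alpha> ** Xi ** transpose \<alpha>"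
      unfolding Nd by (simp only: matrix_add_ldistrib mm_sub_l matrix_mul_assoc)
    have r: "(\<Delta> ** \<alpha>) ** ((Xi - Ai) ** transpose \<alpha>) = \<Delta> ** \<alpha> ** Xi ** transpose \<alpha> - \<Delta> ** \<alpha> ** Ai ** transpose \<alpha>"
      by (simp only: mm_sub_l mm_sub_r matrix_mul_assoc)
    have "\<Delta> ** N = mat 1 + (\<Delta> ** \<alpha>) ** ((Xi - Ai) ** transpose \<alpha>)"
      unfolding l r DDi by (simp add: algebra_simps)
    hence "det (\<Delta> ** N) = det (mat 1 + ((Xi - Ai) ** transpose \<alpha>) ** (\<Delta> ** \<alpha>))"
      using sylvester[OF dp] by simp
    also have "mat 1 + ((Xi - Ai) ** transpose \<alpha>) ** (\<Delta> ** \<alpha>) = Xi ** A"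
    proof -
      have "((Xi - Ai) ** transpose \<alpha>) ** (\<Delta> ** \<alpha>) = (Xi - Ai) ** A" unfolding A_def by (simp only: matrix_mul_assoc)
      also have "\<dots> = Xi ** A - mat 1" by (simp add: mm_sub_r AiA)
      finally show ?thesis by simp
    qed
    finally have e: "det \<Delta> * det N = det Xi * det A" by (simp add: det_mul)
    have pos: "det \<Delta> > 0" "det X > 0" "det A > 0" using spd_det_pos D X A by auto
    have dXi: "det Xi = 1 / det X" unfolding Xi_def by (rule det_minv[OF invX])
    have dLi: "det (matrix_inv N) = 1 / det N" by (rule det_minv[OF invN])
    have dN: "det N = det A / (det X * det \<Delta>)" using e pos unfolding dXi by (simp add: field_simps)
    show ?thesis unfolding dLi dN using pos by (simp add: field_simps)
  qed
qed



lemma tr_cyc: fixes \<alpha> :: "real^'d^'p" and B :: "real^'d^'d" and S :: "real^'p^'p"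
  shows "trace (\<alpha> ** B ** transpose \<alpha> ** S) = trace (B ** (transpose \<alpha> ** S ** \<alpha>))"
proof -
  have "trace (\<alpha> ** B ** transpose \<alpha> ** S) = trace (\<alpha> ** (B ** transpose \<alpha> ** S))"
    by (simp only: matrix_mul_assoc)
  also have "\<dots> = trace ((B ** transpose \<alpha> ** S) ** \<alpha>)" by (rule trace_mul_sym)
  also have "\<dots> = trace (B ** (transpose \<alpha> ** S ** \<alpha>))" by (simp only: matrix_mul_assoc)
  finally show ?thesis .
qed

lemma tr_inv: fixes X :: "real^'n^'n" assumes "spd X"
  shows "trace (matrix_inv X ** X) = real CARD('n)"
  using minv(2)[OF spd_invertible[OF assms]] by (simp add: trace_I)

theorem mainTheorem2:
  fixes S :: "real^'p^'p" and F :: "real^'r^'n" and M :: "real^'p^'n"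
    and \<alpha> :: "real^'d^'p"
  assumes d_le_p: "CARD('d) \<le> CARD('p)"
    and d_le_r: "CARD('d) \<le> CARD('r)"
    and S_spd: "spd S"
    and F_rank: "rank F = CARD('r)"
    and Sres_spd: "spd (S - S_fit F M)"
    and alpha_orth: "transpose \<alpha> ** \<alpha> = mat 1"
  defines "nn \<equiv> real CARD('n)"
    and "Dinv \<equiv> matrix_inv S
                + \<alpha> ** matrix_inv (transpose \<alpha> ** (S - S_fit F M) ** \<alpha>) ** transpose \<alpha>
                - \<alpha> ** matrix_inv (transpose \<alpha> ** S ** \<alpha>) ** transpose \<alpha>"
  shows "invertible Dinv \<and> spd (matrix_inv Dinv)
         \<and> (\<forall>\<Delta>. spd \<Delta> \<longrightarrow> G_fun nn S (S_fit F M) \<alpha> \<Delta> \<le> G_fun nn S (S_fit F M) \<alpha> (matrix_inv Dinv))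
         \<and> G_fun nn S (S_fit F M) \<alpha> (matrix_inv Dinv) =
             - (real CARD('p) * nn / 2) * (ln (2 * pi) + 1)
             - (nn / 2) * ln (det (transpose \<alpha> ** (S - S_fit F M) ** \<alpha>))
             - (nn / 2) * ln (det S)
             + (nn / 2) * ln (det (transpose \<alpha> ** S ** \<alpha>))"
proof -
  define Sf where "Sf = S_fit F M"
  define X1 where "X1 = transpose \<alpha> ** S ** \<alpha>"
  define R where "R = transpose \<alpha> ** (S - Sf) ** \<alpha>"
  define p where "p = real CARD('p)"
  define d where "d = real CARD('d)"
  have inj\<alpha>: "\<alpha> *v x = 0 \<Longrightarrow> x = 0" for x
    using alpha_orth by (metis matrix_vector_mul_assoc matrix_vector_mul_lid matrix_vector_mult_0_right)
  have X1: "spd X1" unfolding X1_def by (rule spd_congr[OF S_spd inj\<alpha>])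
  have R: "spd R" unfolding R_def Sf_def by (rule spd_congr[OF Sres_spd inj\<alpha>])
  have SfX: "transpose \<alpha> ** Sf ** \<alpha> = X1 - R"
    unfolding X1_def R_def by (simp add: mm_sub_l mm_sub_r)
  define f where "f = (\<lambda>\<Delta>::real^'p^'p. ln (det \<Delta>) + trace (matrix_inv \<Delta> ** S)
      - trace (matrix_inv (transpose \<alpha> ** \<Delta> ** \<alpha>) ** (transpose \<alpha> ** Sf ** \<alpha>)))"
  have Gf: "G_fun nn S Sf \<alpha> \<Delta> = - (p * nn / 2) * ln (2 * pi) - (nn / 2) * f \<Delta>" for \<Delta>
    unfolding G_fun_def f_def p_def by (simp add: algebra_simps)
  have trX1: "trace (matrix_inv X1 ** X1) = d" unfolding d_def by (rule tr_inv[OF X1])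
  have DinvN: "Dinv = matrix_inv S - \<alpha> ** matrix_inv (transpose \<alpha> ** S ** \<alpha>) ** transpose \<alpha>
      + \<alpha> ** matrix_inv R ** transpose \<alpha>"
    unfolding Dinv_def R_def Sf_def by (simp add: algebra_simps)
  have c1: "spd Dinv" "transpose \<alpha> ** matrix_inv Dinv ** \<alpha> = R"
     "det (matrix_inv Dinv) * det X1 = det S * det R"
    using cons_lemma[OF d_le_p alpha_orth S_spd R] unfolding DinvN[symmetric] X1_def by auto
  have invD: "invertible Dinv" using spd_invertible[OF c1(1)] .
  have spdDs: "spd (matrix_inv Dinv)" using spd_minv[OF c1(1)] .
  have pos: "det S > 0" "det R > 0" "det X1 > 0" "det (matrix_inv Dinv) > 0"
    using spd_det_pos S_spd R X1 spdDs by auto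
  have lnDs: "ln (det (matrix_inv Dinv)) = ln (det S) + ln (det R) - ln (det X1)"
  proof -
    have "det (matrix_inv Dinv) = det S * det R / det X1" using c1(3) pos by (simp add: field_simps)
    thus ?thesis using pos by (simp add: ln_div ln_mult)
  qed
  have trDS: "trace (Dinv ** S) = p + trace (matrix_inv R ** X1) - d"
  proof -
    have "trace (Dinv ** S) = trace (matrix_inv S ** S) + trace (\<alpha> ** matrix_inv R ** transpose \<alpha> ** S)
        - trace (\<alpha> ** matrix_inv X1 ** transpose \<alpha> ** S)"
      unfolding Dinv_def R_def[symmetric] Sf_def[symmetric] X1_def[symmetric]
      by (simp add: mm_add_r mm_sub_r trace_add trace_sub)
    also have "\<dots> = p + trace (matrix_inv R ** X1) - d"
      unfolding tr_cyc X1_def[symmetric] trX1 tr_inv[OF S_spd] p_def ..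
    finally show ?thesis .
  qed
  have fopt: "f (matrix_inv Dinv) = ln (det S) + ln (det R) - ln (det X1) + p"
  proof -
    have "trace (matrix_inv R ** (X1 - R)) = trace (matrix_inv R ** X1) - d"
      using tr_inv[OF R] unfolding d_def by (simp add: mm_sub_l trace_sub)
    thus ?thesis unfolding f_def minv_minv[OF invD] c1(2) SfX lnDs trDS by simp
  qed
  have ineq: "f (matrix_inv Dinv) \<le> f \<Delta>" if D: "spd \<Delta>" for \<Delta>
  proof -
    define A where "A = transpose \<alpha> ** \<Delta> ** \<alpha>"
    define N where "N = matrix_inv \<Delta> - \<alpha> ** matrix_inv A ** transpose \<alpha> + \<alpha> ** matrix_inv X1 ** transpose \<alpha>"
    have c2: "spd N" "transpose \<alpha> ** matrix_inv N ** \<alpha> = X1" "det (matrix_inv N) * det A = det \<Delta> * det X1"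
      using cons_lemma[OF d_le_p alpha_orth D X1] unfolding A_def[symmetric] N_def[symmetric] by auto
    have A: "spd A" unfolding A_def by (rule spd_congr[OF D inj\<alpha>])
    have invN: "invertible N" using spd_invertible[OF c2(1)] .
    have spdL: "spd (matrix_inv N)" using spd_minv[OF c2(1)] .
    have posA: "det \<Delta> > 0" "det A > 0" "det (matrix_inv N) > 0"
      using spd_det_pos D A spdL by auto
    have lnD: "ln (det \<Delta>) = ln (det (matrix_inv N)) + ln (det A) - ln (det X1)"
    proof -
      have "det \<Delta> = det (matrix_inv N) * det A / det X1" using c2(3) pos by (simp add: field_simps)
      thus ?thesis using pos posA by (simp add: ln_div ln_mult)
    qed
    have Di: "matrix_inv \<Delta> = N + \<alpha> ** matrix_inv A ** transpose \<alpha> - \<alpha> ** matrix_inv X1 ** transpose \<alpha>"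
      unfolding N_def by (simp add: algebra_simps)
    have trDi: "trace (matrix_inv \<Delta> ** S) = trace (N ** S) + trace (matrix_inv A ** X1) - d"
      unfolding Di by (simp add: mm_add_r mm_sub_r trace_add trace_sub tr_cyc X1_def[symmetric] trX1)
    have trSf: "trace (matrix_inv A ** (transpose \<alpha> ** Sf ** \<alpha>)) = trace (matrix_inv A ** X1) - trace (matrix_inv A ** R)"
      unfolding SfX by (simp add: mm_sub_l trace_sub)
    have fD: "f \<Delta> = (ln (det (matrix_inv N)) + trace (matrix_inv (matrix_inv N) ** S))
        + (ln (det A) + trace (matrix_inv A ** R)) - ln (det X1) - d"
      unfolding f_def A_def[symmetric] trDi trSf lnD minv_minv[OF invN] by simp
    have b1: "ln (det S) + p \<le> ln (det (matrix_inv N)) + trace (matrix_inv (matrix_inv N) ** S)"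
      using BI[OF spdL S_spd] unfolding p_def .
    have b2: "ln (det R) + d \<le> ln (det A) + trace (matrix_inv A ** R)"
      using BI[OF A R] unfolding d_def .
    show ?thesis unfolding fD fopt using b1 b2 by linarith
  qed
  have nn0: "nn \<ge> 0" unfolding nn_def by simp
  show ?thesis
  proof (intro conjI allI impI)
    show "invertible Dinv" by (rule invD)
    show "spd (matrix_inv Dinv)" by (rule spdDs)
  next
    fix \<Delta> :: "real^'p^'p" assume "spd \<Delta>"
    hence "f (matrix_inv Dinv) \<le> f \<Delta>" by (rule ineq)
    hence "(nn/2) * f (matrix_inv Dinv) \<le> (nn/2) * f \<Delta>" using nn0 by (simp add: mult_left_mono)
    thus "G_fun nn S (S_fit F M) \<alpha> \<Delta> \<le> G_fun nn S (S_fit F M) \<alpha> (matrix_inv Dinv)"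
      unfolding Sf_def[symmetric] Gf by simp
  next
    show "G_fun nn S (S_fit F M) \<alpha> (matrix_inv Dinv) =
             - (real CARD('p) * nn / 2) * (ln (2 * pi) + 1)
             - (nn / 2) * ln (det (transpose \<alpha> ** (S - S_fit F M) ** \<alpha>))
             - (nn / 2) * ln (det S)
             + (nn / 2) * ln (det (transpose \<alpha> ** S ** \<alpha>))"
      unfolding Sf_def[symmetric] R_def[symmetric] X1_def[symmetric] Gf fopt p_def[symmetric]
      by (simp add: algebra_simps)
  qed
qed

end
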